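(* Let $n\ge3$. The following relations hold in $\mathrm{YTL}_{d,n}(u)$: (1) $g_ig_{i+1}g_i+g_ig_{i+1}+g_{i+1}g_i+g_i+g_{i+1}+1=0$ for $1\le i<n-1$; (2) $(t_i-t_{i+2})(1+g_i)+(t_i-t_{i+1})(g_{i+1}+g_{i+1}g_i)=0$ for $1\le i<n-1$; (3) $(t_{i+2}-t_i)(1+g_{i+1})+(t_{i+2}-t_{i+1})(g_i+g_ig_{i+1})=0$ for $1\le i<n-1$; (4) $(t_{i+2}-t_{i+1})(t_{i+2}-t_i)(g_i+1)=0$ for $1\le i<n-1$; (5) $(t_{i-1}-t_{i+1})(t_{i-1}-t_i)(g_i+1)=0$ for $1<i\le n-1$; (6) $(t_i-t_{i+1})(t_{i+1}-t_{i+2})(t_i-t_{i+2})=0$ for $1\le i<n-1$.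
   Context: Let $d,n\ge1$ be integers and $u$ an indeterminate. The Yokonuma–Hecke algebra $\mathrm{Y}_{d,n}(u)$ is the associative $\mathbb{C}[u,u^{-1}]$-algebra generated by $g_1,\dots,g_{n-1},t_1,\dots,t_n$ subject to: $g_ig_j=g_jg_i$ for $|i-j|>1$; $g_ig_{i+1}g_i=g_{i+1}g_ig_{i+1}$ for $1\le i\le n-2$; $t_it_j=t_jt_i$ for all $i,j$; $t_jg_i=g_it_{s_i(j)}$ for all $i,j$, where $s_i$ is the transposition $(i,i+1)$; $t_j^d=1$ for all $j$; and $g_i^2=1+(u-1)e_i+(u-1)e_ig_i$, where $e_i=\frac1d\sum_{s=0}^{d-1}t_i^st_{i+1}^{-s}$. For $n\ge3$, the Yokonuma–Temperley–Lieb algebra $\mathrm{YTL}_{d,n}(u)$ is the quotient of $\mathrm{Y}_{d,n}(u)$ by the two-sided ideal generated by the elements $g_ig_{i+1}g_i+g_ig_{i+1}+g_{i+1}g_i+g_i+g_{i+1}+1$, $1\le i\le n-2$; images of the generators in the quotient are denoted by the same letters. *)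

theory Defs
  imports Complex_Main
begin

definition sw :: "nat \<Rightarrow> nat \<Rightarrow> nat" where
  "sw i j = (if j = i then i + 1 else if j = i + 1 then i else j)"

text \<open>A C[u,u^-1]-algebra structure on a ring: a unital ring homomorphism phi from the
complex numbers into the centre, and a central unit u.\<close>
definition laurent_alg :: "(complex \<Rightarrow> 'a::ring_1) \<Rightarrow> 'a \<Rightarrow> bool" where
  "laurent_alg phi u \<longleftrightarrow>
     phi 1 = 1 \<and> (\<forall>a b. phi (a + b) = phi a + phi b) \<and> (\<forall>a b. phi (a * b) = phi a * phi b)
     \<and> (\<forall>a x. phi a * x = x * phi a)
     \<and> (\<forall>x. u * x = x * u) \<and> (\<exists>v. u * v = 1 \<and> v * u = 1)"

text \<open>The idempotent e_i = (1/d) sum_{s=0}^{d-1} t_i^s t_{i+1}^{-s}; since t_{i+1}^d = 1,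
t_{i+1}^{-s} = t_{i+1}^{d-s}.\<close>
definition ee :: "(complex \<Rightarrow> 'a::ring_1) \<Rightarrow> nat \<Rightarrow> (nat \<Rightarrow> 'a) \<Rightarrow> nat \<Rightarrow> 'a" where
  "ee phi d t i = phi (1 / of_nat d) * (\<Sum>s<d. t i ^ s * t (i + 1) ^ (d - s))"

text \<open>Elements g_1..g_{n-1}, t_1..t_n of a C[u,u^-1]-algebra satisfying the defining
relations of the Yokonuma-Hecke algebra Y_{d,n}(u).\<close>
definition YH_rels :: "nat \<Rightarrow> nat \<Rightarrow> (complex \<Rightarrow> 'a::ring_1) \<Rightarrow> 'a \<Rightarrow> (nat \<Rightarrow> 'a) \<Rightarrow> (nat \<Rightarrow> 'a) \<Rightarrow> bool" where
  "YH_rels d n phi u g t \<longleftrightarrow>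
     laurent_alg phi u
     \<and> (\<forall>i j. 1 \<le> i \<and> i \<le> n - 1 \<and> 1 \<le> j \<and> j \<le> n - 1 \<and> (i + 1 < j \<or> j + 1 < i)
              \<longrightarrow> g i * g j = g j * g i)
     \<and> (\<forall>i. 1 \<le> i \<and> i \<le> n - 2 \<longrightarrow> g i * g (i+1) * g i = g (i+1) * g i * g (i+1))
     \<and> (\<forall>i j. 1 \<le> i \<and> i \<le> n \<and> 1 \<le> j \<and> j \<le> n \<longrightarrow> t i * t j = t j * t i)
     \<and> (\<forall>i j. 1 \<le> i \<and> i \<le> n - 1 \<and> 1 \<le> j \<and> j \<le> n \<longrightarrow> t j * g i = g i * t (sw i j))
     \<and> (\<forall>j. 1 \<le> j \<and> j \<le> n \<longrightarrow> t j ^ d = 1)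
     \<and> (\<forall>i. 1 \<le> i \<and> i \<le> n - 1 \<longrightarrow>
          g i ^ 2 = 1 + (u - 1) * ee phi d t i + (u - 1) * ee phi d t i * g i)"

text \<open>Additional defining relations of the Yokonuma-Temperley-Lieb quotient YTL_{d,n}(u).\<close>
definition YTL_rels :: "nat \<Rightarrow> nat \<Rightarrow> (complex \<Rightarrow> 'a::ring_1) \<Rightarrow> 'a \<Rightarrow> (nat \<Rightarrow> 'a) \<Rightarrow> (nat \<Rightarrow> 'a) \<Rightarrow> bool" where
  "YTL_rels d n phi u g t \<longleftrightarrow>
     YH_rels d n phi u g t
     \<and> (\<forall>i. 1 \<le> i \<and> i \<le> n - 2 \<longrightarrow>
          g i * g (i+1) * g i + g i * g (i+1) + g (i+1) * g i + g i + g (i+1) + 1 = 0)"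

end

theory Submission imports Defs begin

definition Fs :: "nat \<Rightarrow> 'a::ring_1 \<Rightarrow> 'a \<Rightarrow> 'a" where
  "Fs d x y = (\<Sum>s<d. x ^ s * y ^ (d - s))"

lemma pow_comm: fixes x w :: "'a::ring_1" assumes "x*w = w*x" shows "x^k*w = w*x^k"
  using assms by (induction k) (simp_all add: mult.assoc[symmetric], metis mult.assoc)

lemma pow_move: fixes x g x' :: "'a::ring_1" assumes "x*g = g*x'" shows "x^k*g = g*x'^k"
proof (induction k)
  case (Suc k)
  have "x^Suc k * g = x*(x^k*g)" by (simp add: mult.assoc)
  also have "\<dots> = x*g*x'^k" by (simp add: Suc mult.assoc)
  also have "\<dots> = g*x'^Suc k" by (simp add: assms mult.assoc power_commutes)
  finally show ?case .
qed simp

lemma Fs_move: fixes x y g x' y' :: "'a::ring_1"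
  assumes "x*g = g*x'" "y*g = g*y'" shows "Fs d x y * g = g * Fs d x' y'"
  unfolding Fs_def sum_distrib_left sum_distrib_right
proof (rule sum.cong[OF refl])
  fix s
  have "x^s*y^(d-s)*g = x^s*(y^(d-s)*g)" by (simp add: mult.assoc)
  also have "\<dots> = x^s*g*y'^(d-s)" by (simp add: pow_move[OF assms(2)] mult.assoc)
  also have "\<dots> = g*(x'^s*y'^(d-s))" by (simp add: pow_move[OF assms(1)] mult.assoc)
  finally show "x^s*y^(d-s)*g = g*(x'^s*y'^(d-s))" .
qed

lemma Fs_comm: fixes x y w :: "'a::ring_1"
  assumes "x*w = w*x" "y*w = w*y" shows "Fs d x y * w = w * Fs d x y"
  using Fs_move[OF assms] .

lemma Fs_sym: fixes x y :: "'a::ring_1"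
  assumes "x*y = y*x" "x^d = 1" "y^d = 1" "d \<ge> 1" shows "Fs d x y = Fs d y x"
proof -
  obtain m where d: "d = Suc m" using assms(4) by (cases d) auto
  have c: "\<And>i j. x^i*y^j = y^j*x^i"
    by (metis assms(1) pow_comm power_commutes)
  have A: "\<And>x y :: 'a. x^d = 1 \<Longrightarrow> Fs d x y = y^d + (\<Sum>s<m. x^(Suc s)*y^(m-s))"
    unfolding Fs_def d sum.lessThan_Suc_shift by simp
  have "(\<Sum>s<m. x^(Suc s)*y^(m-s)) = (\<Sum>s<m. x^(Suc (m - Suc s))*y^(m-(m - Suc s)))"
    by (rule sum.reindex_bij_witness[where i="\<lambda>i. m - Suc i" and j="\<lambda>i. m - Suc i"]) auto
  also have "\<dots> = (\<Sum>s<m. y^(Suc s)*x^(m-s))"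
    by (rule sum.cong[OF refl]) (simp add: Suc_diff_Suc, metis c power_Suc)
  finally show ?thesis using A[of x y] A[of y x] assms by simp
qed

lemma Fs_ann: fixes x y :: "'a::ring_1"
  assumes "x*y = y*x" "x^d = 1" "y^d = 1" "d \<ge> 1" shows "(x - y) * Fs d x y = 0"
proof -
  obtain m where d: "d = Suc m" using assms(4) by (cases d) auto
  have c: "\<And>i j. x^i*y^j = y^j*x^i"
    by (metis assms(1) pow_comm power_commutes)
  have "x * Fs d x y = (\<Sum>s<m. x^(Suc s)*y^(Suc m - s)) + x^d*y"
    unfolding Fs_def d sum.lessThan_Suc by (simp add: distrib_left sum_distrib_left mult.assoc)
  also have "\<dots> = (\<Sum>s<m. x^(Suc s)*y^(Suc m - s)) + y" using assms by simp
  finally have X: "x * Fs d x y = (\<Sum>s<m. x^(Suc s)*y^(Suc m - s)) + y" .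
  have "y * Fs d x y = (\<Sum>s<Suc m. x^s*y^(Suc (Suc m - s)))"
    unfolding Fs_def d sum_distrib_left
    by (rule sum.cong[OF refl]) (metis c mult.assoc power_Suc)
  also have "\<dots> = y^(Suc d) + (\<Sum>s<m. x^(Suc s)*y^(Suc m - s))"
    unfolding sum.lessThan_Suc_shift d by (simp add: Suc_diff_le)
  also have "y^(Suc d) = y" using assms by simp
  finally have Y: "y * Fs d x y = y + (\<Sum>s<m. x^(Suc s)*y^(Suc m - s))" .
  show ?thesis using X Y by (simp add: algebra_simps)
qed
lemma core:
 fixes a b x y z E E' q c3 :: "'a::ring_1"
 assumes xy: "x*y=y*x" and xz: "x*z=z*x" and yz: "y*z=z*y"
 and xa: "x*a=a*y" and ya: "y*a=a*x" and za: "z*a=a*z"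
 and xb: "x*b=b*x" and yb: "y*b=b*z" and zb: "z*b=b*y"
 and R: "a*b*a + a*b + b*a + a + b + 1 = 0"
 and Q: "a^2 = 1 + q*E + q*E*a"
 and qc: "\<And>w. q*w = w*q"
 and Ex: "E*x=x*E" and Ey: "E*y=y*E" and Ez: "E*z=z*E" and Ea: "E*a=a*E"
 and bE: "b*E = E'*b" and E'ann: "(z-x)*E' = 0"
 and c3: "c3*(1+1+1) = 1"
 shows "(x-z)*(1+a) + (x-y)*(b+b*a) = 0 \<and> (z-y)*(z-x)*(a+1) = 0"
proof -
  have mv1: "a*y = x*a" "a*x = y*a" "a*z = z*a" "b*x = x*b" "b*z = y*b" "b*y = z*b"
    using assms by simp_all
  have mv2: "\<And>w. a*(y*w) = x*(a*w)" "\<And>w. a*(x*w) = y*(a*w)" "\<And>w. a*(z*w) = z*(a*w)"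
     "\<And>w. b*(x*w) = x*(b*w)" "\<And>w. b*(z*w) = y*(b*w)" "\<And>w. b*(y*w) = z*(b*w)"
    by (simp_all add: mult.assoc[symmetric] mv1)
  have cm: "y*x = x*y" "z*x = x*z" "z*y = y*z" "\<And>w. y*(x*w) = x*(y*w)"
     "\<And>w. z*(x*w) = x*(z*w)" "\<And>w. z*(y*w) = y*(z*w)"
    by (simp_all add: mult.assoc[symmetric] xy xz yz)
  note mv = mv1 mv2 cm
  define A where "A = 1 + a"
  define P where "P = (z-y)*(z-x)"
  define W where "W = P*A"
  let ?R = "a*b*a + a*b + b*a + a + b + 1"
  have S1: "(x-z)*(1+a) + (x-y)*(b+b*a) = x*?R - ?R*z"
    by (simp add: algebra_simps mv)
  hence S1': "(x-z)*(1+a) + (x-y)*(b+b*a) = 0" using R by simp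
  have "(z-y)*((x-z)*(1+a) + (x-y)*(b+b*a)) = b*W - W"
    unfolding W_def P_def A_def by (simp add: algebra_simps mv)
  hence bW: "b*W = W" using S1' by simp
  have "?R = A + A*b*A" unfolding A_def by (simp add: algebra_simps)
  hence AbA: "A*b*A = - A" using R by (simp add: eq_neg_iff_add_eq_0 add.commute)
  have Pa: "P*a = a*P" unfolding P_def by (simp add: algebra_simps mv)
  hence PA: "P*A = A*P" unfolding A_def by (simp add: algebra_simps)
  have "A*b*A*P = A*(b*W)" unfolding W_def by (simp add: PA mult.assoc)
  also have "\<dots> = A*A*P" using bW unfolding W_def by (simp add: PA mult.assoc)
  finally have AAP: "A*A*P + A*P = 0" using AbA by (simp add: eq_neg_iff_add_eq_0[symmetric])
  have aa: "a*a = 1 + q*E + q*E*a" using Q by (simp add: power2_eq_square)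
  have AA: "A*A + A = A + A + A + q*E*A" unfolding A_def by (simp add: algebra_simps aa)
  have "(A + A + A + q*E*A)*P = (A*A + A)*P" by (simp only: AA)
  also have "\<dots> = A*A*P + A*P" by (simp only: distrib_right)
  finally have "(A + A + A + q*E*A)*P = 0" using AAP by simp
  hence S6: "W + W + W + q*E*W = 0" unfolding W_def by (simp add: algebra_simps PA)
  have em: "\<And>w. E*(x*w) = x*(E*w)" "\<And>w. E*(y*w) = y*(E*w)" "\<And>w. E*(z*w) = z*(E*w)"
    by (simp_all add: mult.assoc[symmetric] Ex Ey Ez)
  have PE: "P*E = E*P" unfolding P_def by (simp add: algebra_simps Ex Ey Ez em)
  have K: "P*E*b*E = 0"
  proof -
    have "P*E*b*E = (P*E)*(b*E)" by (simp add: mult.assoc)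
    also have "\<dots> = (E*P)*(E'*b)" by (simp only: PE bE)
    also have "\<dots> = E*(z-y)*((z-x)*E')*b" by (simp add: P_def mult.assoc)
    finally have "P*E*b*E = E*(z-y)*((z-x)*E')*b" .
    thus ?thesis using E'ann by simp
  qed
  have PEa: "P*E*a = a*(P*E)"
  proof -
    have "P*E*a = P*(E*a)" by (simp add: mult.assoc)
    also have "\<dots> = (P*a)*E" by (simp add: Ea mult.assoc)
    also have "\<dots> = a*(P*E)" by (simp add: Pa mult.assoc)
    finally show ?thesis .
  qed
  have T1: "P*E*(a*b*a)*E = a*(P*E*b*E)*a"
  proof -
    have "P*E*(a*b*a)*E = (P*E*a)*b*(a*E)" by (simp add: mult.assoc)
    also have "\<dots> = a*(P*E)*b*(E*a)" by (simp only: PEa Ea)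
    also have "\<dots> = a*(P*E*b*E)*a" by (simp add: mult.assoc)
    finally show ?thesis .
  qed
  have T2: "P*E*(a*b)*E = a*(P*E*b*E)"
  proof -
    have "P*E*(a*b)*E = (P*E*a)*b*E" by (simp add: mult.assoc)
    also have "\<dots> = a*(P*E)*b*E" by (simp only: PEa)
    also have "\<dots> = a*(P*E*b*E)" by (simp add: mult.assoc)
    finally show ?thesis .
  qed
  have T3: "P*E*(b*a)*E = (P*E*b*E)*a"
  proof -
    have "P*E*(b*a)*E = P*E*b*(a*E)" by (simp add: mult.assoc)
    also have "\<dots> = P*E*b*(E*a)" by (simp only: Ea)
    finally show ?thesis by (simp add: mult.assoc)
  qed
  have T4: "P*E*a*E = P*E*E*a"
  proof -
    have "P*E*a*E = P*E*(a*E)" by (simp add: mult.assoc)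
    also have "\<dots> = P*E*(E*a)" by (simp only: Ea)
    finally show ?thesis by (simp add: mult.assoc)
  qed
  have "P*E*?R*E = P*E*(a*b*a)*E + P*E*(a*b)*E + P*E*(b*a)*E + P*E*a*E + P*E*b*E + P*E*E"
    by (simp add: algebra_simps)
  also have "\<dots> = P*E*a*E + P*E*E" using T1 T2 T3 K by simp
  also have "\<dots> = P*E*E*A" using T4 unfolding A_def by (simp add: algebra_simps)
  finally have "P*E*E*A = 0" using R by simp
  hence EEW: "E*E*W = 0" unfolding W_def using PE by (metis mult.assoc)
  have "E*(W + W + W + q*E*W) = E*W + E*W + E*W + q*(E*E*W)"
    by (simp add: algebra_simps qc)
  hence "E*W + E*W + E*W = 0" using S6 EEW by simp
  hence "c3*(1+1+1)*(E*W) = 0" by (simp only: mult.assoc distrib_right mult_1) simp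
  hence "E*W = 0" using c3 by simp
  hence "W + W + W = 0" using S6 by (metis mult.assoc add_0_right mult_zero_right)
  hence "c3*(1+1+1)*W = 0" by (simp only: mult.assoc distrib_right mult_1) simp
  hence "W = 0" using c3 by simp
  hence "(z-y)*(z-x)*(a+1) = 0" unfolding W_def P_def A_def by (simp add: add.commute)
  with S1' show ?thesis by simp
qed
lemma six:
 fixes a b x y z c6 :: "'a::ring_1"
 assumes xy: "x*y=y*x" and xz: "x*z=z*x" and yz: "y*z=z*y"
 and xa: "x*a=a*y" and ya: "y*a=a*x" and za: "z*a=a*z"
 and xb: "x*b=b*x" and yb: "y*b=b*z" and zb: "z*b=b*y"
 and R: "a*b*a + a*b + b*a + a + b + 1 = 0"
 and W: "(z-y)*(z-x)*(a+1) = 0" and W': "(x-y)*(x-z)*(b+1) = 0"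
 and c6: "c6*(1+1+1+1+1+1) = 1"
 shows "(x-y)*(y-z)*(x-z) = 0"
proof -
  have mv1: "a*y = x*a" "a*x = y*a" "a*z = z*a" "b*x = x*b" "b*z = y*b" "b*y = z*b"
    using assms by simp_all
  have mv2: "\<And>w. a*(y*w) = x*(a*w)" "\<And>w. a*(x*w) = y*(a*w)" "\<And>w. a*(z*w) = z*(a*w)"
     "\<And>w. b*(x*w) = x*(b*w)" "\<And>w. b*(z*w) = y*(b*w)" "\<And>w. b*(y*w) = z*(b*w)"
    by (simp_all add: mult.assoc[symmetric] mv1)
  have cm: "y*x = x*y" "z*x = x*z" "z*y = y*z" "\<And>w. y*(x*w) = x*(y*w)"
     "\<And>w. z*(x*w) = x*(z*w)" "\<And>w. z*(y*w) = y*(z*w)"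
    by (simp_all add: mult.assoc[symmetric] xy xz yz)
  note mv = mv1 mv2 cm
  define D where "D = (x-y)*(y-z)*(x-z)"
  have Da: "D*a = -(a*D)" unfolding D_def by (simp add: algebra_simps mv)
  have Db: "D*b = -(b*D)" unfolding D_def by (simp add: algebra_simps mv)
  have "D*(a+1) = (x-y)*((z-y)*(z-x)*(a+1))" unfolding D_def by (simp add: algebra_simps mv)
  hence "D*(a+1) = 0" using W by simp
  hence "D*a + D = 0" by (simp add: distrib_left)
  hence aD: "a*D = D" using Da by (simp add: add.commute add_eq_0_iff)
  have "D*(b+1) = (y-z)*((x-y)*(x-z)*(b+1))" unfolding D_def by (simp add: algebra_simps mv)
  hence "D*(b+1) = 0" using W' by simp
  hence "D*b + D = 0" by (simp add: distrib_left)
  hence bD: "b*D = D" using Db by (simp add: add.commute add_eq_0_iff)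
  have "(a*b*a + a*b + b*a + a + b + 1)*D = D+D+D+D+D+D"
    by (simp add: distrib_right mult.assoc aD bD)
  hence "D+D+D+D+D+D = 0" using R by simp
  hence "c6*(1+1+1+1+1+1)*D = 0" by (simp only: mult.assoc distrib_right mult_1) simp
  thus ?thesis using c6 D_def by simp
qed
lemma cen_comm: fixes c F w :: "'a::ring_1" assumes "\<And>v. c*v = v*c" "F*w = w*F"
  shows "(c*F)*w = w*(c*F)"
  by (metis assms mult.assoc)

theorem mainTheorem12:
  fixes d n :: nat and phi :: "complex \<Rightarrow> 'a::ring_1" and u :: 'a
    and g t :: "nat \<Rightarrow> 'a"
  assumes "d \<ge> 1" and "n \<ge> 3"
    and "YTL_rels d n phi u g t"
  shows "(\<forall>i. 1 \<le> i \<and> i < n - 1 \<longrightarrow>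
            g i * g (i+1) * g i + g i * g (i+1) + g (i+1) * g i + g i + g (i+1) + 1 = 0)
       \<and> (\<forall>i. 1 \<le> i \<and> i < n - 1 \<longrightarrow>
            (t i - t (i+2)) * (1 + g i) + (t i - t (i+1)) * (g (i+1) + g (i+1) * g i) = 0)
       \<and> (\<forall>i. 1 \<le> i \<and> i < n - 1 \<longrightarrow>
            (t (i+2) - t i) * (1 + g (i+1)) + (t (i+2) - t (i+1)) * (g i + g i * g (i+1)) = 0)
       \<and> (\<forall>i. 1 \<le> i \<and> i < n - 1 \<longrightarrow>
            (t (i+2) - t (i+1)) * (t (i+2) - t i) * (g i + 1) = 0)
       \<and> (\<forall>i. 1 < i \<and> i \<le> n - 1 \<longrightarrow>
            (t (i-1) - t (i+1)) * (t (i-1) - t i) * (g i + 1) = 0)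
       \<and> (\<forall>i. 1 \<le> i \<and> i < n - 1 \<longrightarrow>
            (t i - t (i+1)) * (t (i+1) - t (i+2)) * (t i - t (i+2)) = 0)"
proof -
  note H = assms(3)[unfolded YTL_rels_def YH_rels_def]
  have L: "laurent_alg phi u" using H by (elim conjE)
  note L' = L[unfolded laurent_alg_def]
  have phi1: "phi 1 = 1" using L' by (elim conjE)
  have phiadd: "\<And>a b. phi (a + b) = phi a + phi b" using L' by (elim conjE) blast
  have phimul: "\<And>a b. phi (a * b) = phi a * phi b" using L' by (elim conjE) blast
  have phic: "\<And>a x. phi a * x = x * phi a" using L' by (elim conjE) blast
  have uc: "\<And>x. u * x = x * u" using L' by (elim conjE) blast
  have braid: "\<And>i. 1 \<le> i \<Longrightarrow> i \<le> n - 2 \<Longrightarrow> g i * g (i+1) * g i = g (i+1) * g i * g (i+1)"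
    using H by blast
  have tc: "\<And>i j. 1 \<le> i \<Longrightarrow> i \<le> n \<Longrightarrow> 1 \<le> j \<Longrightarrow> j \<le> n \<Longrightarrow> t i * t j = t j * t i"
    using H by blast
  have tg: "\<And>i j. 1 \<le> i \<Longrightarrow> i \<le> n - 1 \<Longrightarrow> 1 \<le> j \<Longrightarrow> j \<le> n \<Longrightarrow> t j * g i = g i * t (sw i j)"
    using H by blast
  have td: "\<And>j. 1 \<le> j \<Longrightarrow> j \<le> n \<Longrightarrow> t j ^ d = 1" using H by blast
  have quad: "\<And>i. 1 \<le> i \<Longrightarrow> i \<le> n - 1 \<Longrightarrow>
          g i ^ 2 = 1 + (u - 1) * ee phi d t i + (u - 1) * ee phi d t i * g i" using H by blast
  have RR: "\<And>i. 1 \<le> i \<Longrightarrow> i \<le> n - 2 \<Longrightarrow>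
          g i * g (i+1) * g i + g i * g (i+1) + g (i+1) * g i + g i + g (i+1) + 1 = 0" using H by blast
  have c3: "phi (1/3) * (1+1+1) = 1"
  proof -
    have "phi (1/3) * (1+1+1) = phi (1/3) * (phi 1 + phi 1 + phi 1)" by (simp only: phi1)
    also have "\<dots> = phi (1/3) * phi (1+1+1)" by (simp only: phiadd)
    also have "\<dots> = phi ((1/3) * (1+1+1))" by (simp only: phimul)
    also have "(1/3::complex) * (1+1+1) = 1" by simp
    finally show ?thesis using phi1 by simp
  qed
  have c6: "phi (1/6) * (1+1+1+1+1+1) = 1"
  proof -
    have "phi (1/6) * (1+1+1+1+1+1) = phi (1/6) * (phi 1 + phi 1 + phi 1 + phi 1 + phi 1 + phi 1)" by (simp only: phi1)
    also have "\<dots> = phi (1/6) * phi (1+1+1+1+1+1)" by (simp only: phiadd)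
    also have "\<dots> = phi ((1/6) * (1+1+1+1+1+1))" by (simp only: phimul)
    also have "(1/6::complex) * (1+1+1+1+1+1) = 1" by simp
    finally show ?thesis using phi1 by simp
  qed
  have qc: "\<And>w. (u - 1) * w = w * (u - 1)" by (simp add: algebra_simps uc)
  define c where "c = phi (1 / of_nat d)"
  have cc: "\<And>v. c*v = v*c" unfolding c_def by (rule phic)
  have eeF: "\<And>i. ee phi d t i = c * Fs d (t i) (t (i+1))" unfolding ee_def Fs_def c_def by simp
  have per: "(t i - t (i+2)) * (1 + g i) + (t i - t (i+1)) * (g (i+1) + g (i+1) * g i) = 0
     \<and> (t (i+2) - t i) * (1 + g (i+1)) + (t (i+2) - t (i+1)) * (g i + g i * g (i+1)) = 0
     \<and> (t (i+2) - t (i+1)) * (t (i+2) - t i) * (g i + 1) = 0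
     \<and> (t i - t (i+2)) * (t i - t (i+1)) * (g (i+1) + 1) = 0
     \<and> (t i - t (i+1)) * (t (i+1) - t (i+2)) * (t i - t (i+2)) = 0"
    if i: "1 \<le> i" "i < n - 1" for i
  proof -
    have i1: "i \<le> n - 1" "i+1 \<le> n - 1" "i + 2 \<le> n" "i \<le> n - 2" "1 \<le> i+1" "i+1 \<le> n" "i \<le> n"
      using i by auto
    define x where "x = t i"
    define y where "y = t (i+1)"
    define z where "z = t (i+2)"
    define a where "a = g i"
    define b where "b = g (i+1)"
    have xy: "x*y=y*x" and xz: "x*z=z*x" and yz: "y*z=z*y"
      unfolding x_def y_def z_def using tc i1 i by auto
    have xa: "x*a=a*y" and ya: "y*a=a*x" and za: "z*a=a*z"
      unfolding x_def y_def z_def a_def using tg[of i] i1 i by (auto simp: sw_def)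
    have xb: "x*b=b*x" and yb: "y*b=b*z" and zb: "z*b=b*y"
      unfolding x_def y_def z_def b_def using tg[of "i+1"] i1 i by (auto simp: sw_def)
    have xd: "x^d = 1" "y^d = 1" "z^d = 1" unfolding x_def y_def z_def using td i1 i by auto
    have R: "a*b*a + a*b + b*a + a + b + 1 = 0" unfolding a_def b_def using RR i1 i by auto
    have br: "a*b*a = b*a*b" unfolding a_def b_def using braid i1 i by auto
    have R': "b*a*b + b*a + a*b + b + a + 1 = 0" using R br by (simp add: algebra_simps)
    define E1 where "E1 = c * Fs d x y"
    define E2 where "E2 = c * Fs d y z"
    define E' where "E' = c * Fs d x z"
    have Q1: "a^2 = 1 + (u-1)*E1 + (u-1)*E1*a"
      unfolding E1_def a_def x_def y_def using quad[OF i(1) i1(1)] unfolding eeF .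
    have Q2: "b^2 = 1 + (u-1)*E2 + (u-1)*E2*b"
      unfolding E2_def b_def y_def z_def using quad[OF i1(5) i1(2)] unfolding eeF by (simp add: add.assoc)
    have E1t: "E1*x=x*E1" "E1*y=y*E1" "E1*z=z*E1" unfolding E1_def
      by (rule cen_comm[OF cc Fs_comm[OF refl xy[symmetric]]],
          rule cen_comm[OF cc Fs_comm[OF xy refl]],
          rule cen_comm[OF cc Fs_comm[OF xz yz]])
    have E2t: "E2*x=x*E2" "E2*y=y*E2" "E2*z=z*E2" unfolding E2_def
      by (rule cen_comm[OF cc Fs_comm[OF xy[symmetric] xz[symmetric]]],
          rule cen_comm[OF cc Fs_comm[OF refl yz[symmetric]]],
          rule cen_comm[OF cc Fs_comm[OF yz refl]])
    have "Fs d x y * a = a * Fs d x y"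
      using Fs_move[OF xa ya, of d] Fs_sym[OF xy xd(1) xd(2) assms(1)] by simp
    hence E1a: "E1*a = a*E1" unfolding E1_def by (rule cen_comm[OF cc])
    have "Fs d y z * b = b * Fs d y z"
      using Fs_move[OF yb zb, of d] Fs_sym[OF yz xd(2) xd(3) assms(1)] by simp
    hence E2b: "E2*b = b*E2" unfolding E2_def by (rule cen_comm[OF cc])
    have bE1: "b*E1 = E'*b" unfolding E1_def E'_def
      using Fs_move[OF xb zb, of d] cc by (metis mult.assoc)
    have aE2: "a*E2 = E'*a" unfolding E2_def E'_def
      using Fs_move[OF xa za, of d] cc by (metis mult.assoc)
    have ann: "(x-z)*E' = 0" unfolding E'_def
      using Fs_ann[OF xz xd(1) xd(3) assms(1)] cc by (metis mult.assoc mult_zero_right)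
    have E'ann: "(z-x)*E' = 0"
    proof -
      have "(z-x)*E' = - ((x-z)*E')" by (simp add: algebra_simps)
      thus ?thesis using ann by simp
    qed
    note C1 = core[OF xy xz yz xa ya za xb yb zb R Q1 qc E1t E1a bE1 E'ann c3]
    note C2 = core[of z y x b a, OF yz[symmetric] xz[symmetric] xy[symmetric] zb yb xb za ya xa R' Q2 qc
        E2t(3) E2t(2) E2t(1) E2b aE2 ann c3]
    note S = six[OF xy xz yz xa ya za xb yb zb R conjunct2[OF C1] conjunct2[OF C2] c6]
    have sw: "(x-z)*(x-y) = (x-y)*(x-z)" by (simp add: algebra_simps xy xz yz)
    show ?thesis using C1 C2 S sw unfolding x_def y_def z_def a_def b_def by simp
  qed
  show ?thesis
  proof (intro conjI allI impI)
    fix i assume "1 \<le> i \<and> i < n - 1"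
    thus "g i * g (i+1) * g i + g i * g (i+1) + g (i+1) * g i + g i + g (i+1) + 1 = 0"
      using RR by auto
  next
    fix i assume "1 < i \<and> i \<le> n - 1"
    hence "1 \<le> i - 1" "i - 1 < n - 1" "i - 1 + 1 = i" "i - 1 + 2 = i + 1" by auto
    thus "(t (i-1) - t (i+1)) * (t (i-1) - t i) * (g i + 1) = 0"
      using per[of "i-1"] by simp
  qed (use per in auto)
qed

end
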